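(* Assume $\kappa\le\lambda<0$, nonnegative progress values, $w\ge0$, and that a feasible trajectory pair exists. Let $(i^{cg},j^{cg})$ be a Stackelberg equilibrium (P1 leader) of the cooperative game $(A^c,B^c)$. Then $(i^{cg},j^{cg})$ is a Nash equilibrium of the blocking game $(A^b,B^b)$. Moreover, if a blocking pair $(i^b,j^b)$ (relative to $(i^{cg},j^{cg})$) is a Nash equilibrium of the cooperative game, then it is a Nash equilibrium of the blocking game.
   Context: Abstract two-player racing set-up. Player 1 (P1, the leader) chooses a trajectory $i\in\Gamma^1=\{1,\dots,n\}$, player 2 (P2) chooses $j\in\Gamma^2=\{1,\dots,m\}$. Each trajectory has a progress value $P^1_i\ge 0$ (resp. $P^2_j\ge 0$). Each trajectory is either on track or off track, and each pair $(i,j)$ either collides or not. A pair $(i,j)$ is feasible if $i$ and $j$ are both on track and $(i,j)$ does not collide. Constants $\kappa\le\lambda<0$ and $w\ge0$ are fixed. Cooperative game: $a^{c}_{i,j}=\kappa$ if $i$ is off track; otherwise $\lambda$ if $(i,j)$ collides; otherwise $P^1_i$. $b^{c}_{i,j}=\kappa$ if $j$ is off track; otherwise $\lambda$ if $(i,j)$ collides; otherwise $P^2_j$. Blocking game: $a^{b}_{i,j}=\kappa$ if $i$ is off track; otherwise $\lambda$ if $(i,j)$ collides; otherwise $P^1_i$ if $P^1_i<P^2_j$; otherwise $P^1_i+w$. $b^{b}_{i,j}=\kappa$ if $j$ is off track; otherwise $\lambda$ if $(i,j)$ collides; otherwise $P^2_j$ if $P^1_i\ge P^2_j$; otherwise $P^2_j+w$.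 Blocking pair (relative to a fixed Stackelberg equilibrium $(i^{cg},j^{cg})$ of the cooperative game): a pair $(i,j)$ such that (i) $P^1_{i^{cg}}<P^2_{j^{cg}}$; (ii) $P^1_i>P^2_j$; (iii) $(i,j)$ is feasible; (iv) for every $j^c\in\Gamma^2$ with $P^2_{j^c}>P^2_j$ one has $b^{c}_{i,j^c}\le\lambda$. For a bimatrix game $(A,B)$: $R(i)=\arg\max_{j}b_{i,j}$; $(i^*,j^* )$ is a Stackelberg equilibrium with P1 as leader if $i^*\in\arg\max_{i}\min_{j\in R(i)}a_{i,j}$ and $j^*\in R(i^* )$; $(i^*,j^* )$ is a Nash equilibrium if $a_{i^*,j^*}\ge a_{i,j^*}$ for all $i$ and $b_{i^*,j^*}\ge b_{i^*,j}$ for all $j$. Only pure strategies are considered. *)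

theory Defs
  imports Main "HOL.Real"
begin

definition feasible ::
  "(nat \<Rightarrow> bool) \<Rightarrow> (nat \<Rightarrow> bool) \<Rightarrow> (nat \<Rightarrow> nat \<Rightarrow> bool) \<Rightarrow> nat \<Rightarrow> nat \<Rightarrow> bool" where
  "feasible on1 on2 coll i j \<longleftrightarrow> on1 i \<and> on2 j \<and> \<not> coll i j"

definition a_coop ::
  "real \<Rightarrow> real \<Rightarrow> (nat \<Rightarrow> real) \<Rightarrow> (nat \<Rightarrow> bool) \<Rightarrow> (nat \<Rightarrow> nat \<Rightarrow> bool) \<Rightarrow> nat \<Rightarrow> nat \<Rightarrow> real" where
  "a_coop kap lam P1 on1 coll i j =
     (if \<not> on1 i then kap else if coll i j then lam else P1 i)"

definition b_coop ::
  "real \<Rightarrow> real \<Rightarrow> (nat \<Rightarrow> real) \<Rightarrow> (nat \<Rightarrow> bool) \<Rightarrow> (nat \<Rightarrow> nat \<Rightarrow> bool) \<Rightarrow> nat \<Rightarrow> nat \<Rightarrow> real" where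
  "b_coop kap lam P2 on2 coll i j =
     (if \<not> on2 j then kap else if coll i j then lam else P2 j)"

definition a_block ::
  "real \<Rightarrow> real \<Rightarrow> real \<Rightarrow> (nat \<Rightarrow> real) \<Rightarrow> (nat \<Rightarrow> real) \<Rightarrow> (nat \<Rightarrow> bool) \<Rightarrow> (nat \<Rightarrow> nat \<Rightarrow> bool) \<Rightarrow> nat \<Rightarrow> nat \<Rightarrow> real" where
  "a_block kap lam w P1 P2 on1 coll i j =
     (if \<not> on1 i then kap else if coll i j then lam
      else if P1 i < P2 j then P1 i else P1 i + w)"

definition b_block ::
  "real \<Rightarrow> real \<Rightarrow> real \<Rightarrow> (nat \<Rightarrow> real) \<Rightarrow> (nat \<Rightarrow> real) \<Rightarrow> (nat \<Rightarrow> bool) \<Rightarrow> (nat \<Rightarrow> nat \<Rightarrow> bool) \<Rightarrow> nat \<Rightarrow> nat \<Rightarrow> real" where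
  "b_block kap lam w P1 P2 on2 coll i j =
     (if \<not> on2 j then kap else if coll i j then lam
      else if P1 i \<ge> P2 j then P2 j else P2 j + w)"

definition best_resp :: "nat set \<Rightarrow> (nat \<Rightarrow> nat \<Rightarrow> real) \<Rightarrow> nat \<Rightarrow> nat set" where
  "best_resp S2 B i = {j \<in> S2. \<forall>j'\<in>S2. B i j' \<le> B i j}"

text \<open>Pure Stackelberg equilibrium with P1 as leader (pessimistic over ties).\<close>
definition stackelberg ::
  "nat set \<Rightarrow> nat set \<Rightarrow> (nat \<Rightarrow> nat \<Rightarrow> real) \<Rightarrow> (nat \<Rightarrow> nat \<Rightarrow> real) \<Rightarrow> nat \<Rightarrow> nat \<Rightarrow> bool" where
  "stackelberg S1 S2 A B is js \<longleftrightarrow>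
     is \<in> S1 \<and> js \<in> best_resp S2 B is \<and>
     (\<forall>i\<in>S1. Min (A i ` best_resp S2 B i) \<le> Min (A is ` best_resp S2 B is))"

definition nash ::
  "nat set \<Rightarrow> nat set \<Rightarrow> (nat \<Rightarrow> nat \<Rightarrow> real) \<Rightarrow> (nat \<Rightarrow> nat \<Rightarrow> real) \<Rightarrow> nat \<Rightarrow> nat \<Rightarrow> bool" where
  "nash S1 S2 A B is js \<longleftrightarrow>
     is \<in> S1 \<and> js \<in> S2 \<and>
     (\<forall>i\<in>S1. A i js \<le> A is js) \<and> (\<forall>j\<in>S2. B is j \<le> B is js)"

definition blocking_pair ::
  "nat \<Rightarrow> real \<Rightarrow> real \<Rightarrow> (nat \<Rightarrow> real) \<Rightarrow> (nat \<Rightarrow> real) \<Rightarrow> (nat \<Rightarrow> bool) \<Rightarrow> (nat \<Rightarrow> bool)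
    \<Rightarrow> (nat \<Rightarrow> nat \<Rightarrow> bool) \<Rightarrow> nat \<Rightarrow> nat \<Rightarrow> nat \<Rightarrow> nat \<Rightarrow> nat \<Rightarrow> bool" where
  "blocking_pair n kap lam P1 P2 on1 on2 coll m icg jcg i j \<longleftrightarrow>
     i \<in> {1..n} \<and> j \<in> {1..m} \<and>
     P1 icg < P2 jcg \<and>
     P1 i > P2 j \<and>
     feasible on1 on2 coll i j \<and>
     (\<forall>jc\<in>{1..m}. P2 jc > P2 j \<longrightarrow> b_coop kap lam P2 on2 coll i jc \<le> lam)"

end

theory Submission
  imports Defs
begin

lemma br_nonempty:
  assumes "finite S" "S \<noteq> {}"
  shows "best_resp S B i \<noteq> {}"
proof -
  have "Max (B i ` S) \<in> B i ` S" using assms by simp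
  then obtain j where j: "j \<in> S" "B i j = Max (B i ` S)" by auto
  have "\<forall>j'\<in>S. B i j' \<le> B i j" using j assms by simp
  then show ?thesis using j unfolding best_resp_def by blast
qed

theorem theorem2:
  fixes n m :: nat
    and P1 P2 :: "nat \<Rightarrow> real"
    and on1 on2 :: "nat \<Rightarrow> bool"
    and coll :: "nat \<Rightarrow> nat \<Rightarrow> bool"
    and kap lam w :: real
    and icg jcg :: nat
  assumes "kap \<le> lam" and "lam < 0" and "w \<ge> 0"
    and "\<forall>i\<in>{1..n}. P1 i \<ge> 0" and "\<forall>j\<in>{1..m}. P2 j \<ge> 0"
    and "\<exists>i\<in>{1..n}. \<exists>j\<in>{1..m}. feasible on1 on2 coll i j"
    and "stackelberg {1..n} {1..m} (a_coop kap lam P1 on1 coll) (b_coop kap lam P2 on2 coll) icg jcg"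
  shows "nash {1..n} {1..m} (a_block kap lam w P1 P2 on1 coll) (b_block kap lam w P1 P2 on2 coll) icg jcg
    \<and> (\<forall>ib jb. blocking_pair n kap lam P1 P2 on1 on2 coll m icg jcg ib jb
          \<and> nash {1..n} {1..m} (a_coop kap lam P1 on1 coll) (b_coop kap lam P2 on2 coll) ib jb
          \<longrightarrow> nash {1..n} {1..m} (a_block kap lam w P1 P2 on1 coll) (b_block kap lam w P1 P2 on2 coll) ib jb)"
proof
  let ?A = "a_coop kap lam P1 on1 coll" and ?B = "b_coop kap lam P2 on2 coll"
  let ?R = "best_resp {1..m} ?B"
  have fin: "finite {1..m}" by simp
  from assms(7) have icg: "icg \<in> {1..n}" and jcg: "jcg \<in> ?R icg"
    and st: "\<forall>i\<in>{1..n}. Min (?A i ` ?R i) \<le> Min (?A icg ` ?R icg)"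
    unfolding stackelberg_def by auto
  have jcgm: "jcg \<in> {1..m}" using jcg unfolding best_resp_def by auto
  have ne: "\<And>i. ?R i \<noteq> {}" by (rule br_nonempty) (use jcgm in auto)
  have finR: "\<And>i. finite (?R i)" unfolding best_resp_def by simp
  obtain i0 j0 where i0: "i0 \<in> {1..n}" and j0: "j0 \<in> {1..m}" and f0: "feasible on1 on2 coll i0 j0"
    using assms(6) by blast
  have brfeas: "on2 j \<and> \<not> coll i j"
    if "j \<in> ?R i" "j' \<in> {1..m}" "on2 j'" "\<not> coll i j'" for i j j'
  proof -
    have "?B i j' \<le> ?B i j" using that unfolding best_resp_def by auto
    moreover have "?B i j' = P2 j'" using that unfolding b_coop_def by auto
    moreover have "P2 j' \<ge> 0" using assms(5) that by auto
    ultimately show ?thesis using assms(1,2) unfolding b_coop_def by (auto split: if_splits)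
  qed
  have minval: "Min (?A i ` ?R i) = P1 i"
    if "on1 i" "j' \<in> {1..m}" "on2 j'" "\<not> coll i j'" for i j'
  proof -
    have "?A i ` ?R i = {P1 i}"
    proof -
      have "\<forall>j\<in>?R i. ?A i j = P1 i" using brfeas[OF _ that(2-4)] that(1) unfolding a_coop_def by auto
      then show ?thesis using ne[of i] by auto
    qed
    then show ?thesis by simp
  qed
  have "Min (?A i0 ` ?R i0) = P1 i0" using minval[of i0 j0] f0 j0 unfolding feasible_def by auto
  hence m0: "Min (?A icg ` ?R icg) \<ge> 0" using st i0 assms(4) by (metis order_trans)
  have "Min (?A icg ` ?R icg) \<le> ?A icg jcg" using finR[of icg] jcg by simp
  hence "?A icg jcg \<ge> 0" using m0 by linarith
  hence on1i: "on1 icg" and ncoll: "\<not> coll icg jcg" using assms(1,2) unfolding a_coop_def by (auto split: if_splits)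
  have allR: "\<not> coll icg j" if "j \<in> ?R icg" for j
  proof -
    have "Min (?A icg ` ?R icg) \<le> ?A icg j" using finR[of icg] that by simp
    hence "?A icg j \<ge> 0" using m0 by linarith
    thus ?thesis using assms(1,2) unfolding a_coop_def by (auto split: if_splits)
  qed
  have bb: "?B icg j0 \<le> ?B icg jcg" using jcg j0 unfolding best_resp_def by auto
  have P20: "P2 j0 \<ge> 0" using j0 assms(5) by auto
  have on2j: "on2 jcg"
  proof (rule ccontr)
    assume no: "\<not> on2 jcg"
    hence bk: "?B icg jcg = kap" unfolding b_coop_def by simp
    have "coll icg j0" using bb bk f0 P20 assms(1,2) unfolding b_coop_def feasible_def by (auto split: if_splits)
    hence b0: "?B icg j0 = lam" using f0 unfolding b_coop_def feasible_def by simp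
    have eq: "?B icg j0 = ?B icg jcg" using b0 bk bb assms(1) by linarith
    have "\<forall>j'\<in>{1..m}. ?B icg j' \<le> ?B icg jcg" using jcg unfolding best_resp_def by blast
    hence "\<forall>j'\<in>{1..m}. ?B icg j' \<le> ?B icg j0" using eq by simp
    hence "j0 \<in> ?R icg" using j0 unfolding best_resp_def by blast
    thus False using allR \<open>coll icg j0\<close> by blast
  qed
  have mcg: "Min (?A icg ` ?R icg) = P1 icg" using minval[of icg jcg] on1i on2j ncoll jcgm by auto
  have Pi: "P1 icg \<ge> 0" using icg assms(4) by auto
  have Pj: "P2 jcg \<ge> 0" using jcgm assms(5) by auto
  show "nash {1..n} {1..m} (a_block kap lam w P1 P2 on1 coll) (b_block kap lam w P1 P2 on2 coll) icg jcg"
    unfolding nash_def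
  proof (intro conjI ballI)
    show "icg \<in> {1..n}" by fact
    show "jcg \<in> {1..m}" by fact
  next
    fix i assume i: "i \<in> {1..n}"
    show "a_block kap lam w P1 P2 on1 coll i jcg \<le> a_block kap lam w P1 P2 on1 coll icg jcg"
    proof (cases "on1 i \<and> \<not> coll i jcg")
      case True
      have "Min (?A i ` ?R i) = P1 i" using minval[of i jcg] True on2j jcgm by auto
      hence "P1 i \<le> P1 icg" using st i mcg by metis
      then show ?thesis using True on1i ncoll assms(3) unfolding a_block_def by auto
    next
      case False
      then show ?thesis using on1i ncoll assms(1,2,3) Pi unfolding a_block_def by auto
    qed
  next
    fix j assume j: "j \<in> {1..m}"
    show "b_block kap lam w P1 P2 on2 coll icg j \<le> b_block kap lam w P1 P2 on2 coll icg jcg"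
    proof (cases "on2 j \<and> \<not> coll icg j")
      case True
      have "?B icg j \<le> ?B icg jcg" using jcg j unfolding best_resp_def by auto
      hence "P2 j \<le> P2 jcg" using True on2j ncoll unfolding b_coop_def by auto
      then show ?thesis using True on2j ncoll assms(3) unfolding b_block_def by auto
    next
      case False
      then show ?thesis using on2j ncoll assms(1,2,3) Pj unfolding b_block_def by auto
    qed
  qed
next
  show "\<forall>ib jb. blocking_pair n kap lam P1 P2 on1 on2 coll m icg jcg ib jb
          \<and> nash {1..n} {1..m} (a_coop kap lam P1 on1 coll) (b_coop kap lam P2 on2 coll) ib jb
          \<longrightarrow> nash {1..n} {1..m} (a_block kap lam w P1 P2 on1 coll) (b_block kap lam w P1 P2 on2 coll) ib jb"
  proof (intro allI impI)
    fix ib jb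
    assume h: "blocking_pair n kap lam P1 P2 on1 on2 coll m icg jcg ib jb
          \<and> nash {1..n} {1..m} (a_coop kap lam P1 on1 coll) (b_coop kap lam P2 on2 coll) ib jb"
    hence ib: "ib \<in> {1..n}" and jb: "jb \<in> {1..m}" and gt: "P1 ib > P2 jb"
      and fb: "on1 ib" "on2 jb" "\<not> coll ib jb"
      and NA: "\<forall>i\<in>{1..n}. a_coop kap lam P1 on1 coll i jb \<le> a_coop kap lam P1 on1 coll ib jb"
      and NB: "\<forall>j\<in>{1..m}. b_coop kap lam P2 on2 coll ib j \<le> b_coop kap lam P2 on2 coll ib jb"
      unfolding blocking_pair_def nash_def feasible_def by auto
    have Pj: "P2 jb \<ge> 0" using jb assms(5) by auto
    show "nash {1..n} {1..m} (a_block kap lam w P1 P2 on1 coll) (b_block kap lam w P1 P2 on2 coll) ib jb"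
      unfolding nash_def
    proof (intro conjI ballI)
      show "ib \<in> {1..n}" by fact
      show "jb \<in> {1..m}" by fact
    next
      fix i assume i: "i \<in> {1..n}"
      have "a_coop kap lam P1 on1 coll i jb \<le> P1 ib" using NA i fb unfolding a_coop_def by auto
      then show "a_block kap lam w P1 P2 on1 coll i jb \<le> a_block kap lam w P1 P2 on1 coll ib jb"
        using fb gt assms(3) unfolding a_block_def a_coop_def by (auto split: if_splits)
    next
      fix j assume j: "j \<in> {1..m}"
      have "b_coop kap lam P2 on2 coll ib j \<le> P2 jb" using NB j fb unfolding b_coop_def by auto
      then show "b_block kap lam w P1 P2 on2 coll ib j \<le> b_block kap lam w P1 P2 on2 coll ib jb"
        using fb gt assms(1,2,3) Pj unfolding b_block_def b_coop_def by (auto split: if_splits)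
    qed
  qed
qed

end
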